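(* Let $\beta\in(0,\tfrac12)$. Then $\mathcal{A}_\beta\ne\emptyset$; consequently $\lambda_1(\beta)=\sup\mathcal{A}_\beta$ is well-defined and strictly positive.
   Context: Tree: for an integer $m\ge2$, $\mathbb{T}_m$ has vertices the root $\emptyset$ and all finite sequences $(\emptyset,a_1,\dots,a_k)$, $a_i\in\{0,\dots,m-1\}$; $|x|$ is the level, successors of $x$ are $(x,i)$, $\hat x$ is the immediate predecessor of $x\ne\emptyset$. Operator: $p_\beta=\beta/(1-\beta)$ for $\beta\in(0,1)$. $\Delta_\beta u(\emptyset)=\frac1m\sum_{i=0}^{m-1}u(\emptyset,i)-u(\emptyset)$ and, for $x\ne\emptyset$, $\Delta_\beta u(x)=\big(\beta u(\hat x)+\frac{1-\beta}{m}\sum_{i=0}^{m-1}u(x,i)-u(x)\big)p_\beta^{-|x|}$. $\mathcal{A}_\beta=\{\lambda>0:\exists v:\mathbb{T}_m\to\mathbb{R}\text{ and constants }0<c<C\text{ with } c<v<C \text{ and } \Delta_\beta v+\lambda v\le0 \text{ on }\mathbb{T}_m\}$, $\lambda_1(\beta)=\sup\mathcal{A}_\beta$. *)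

theory Defs
  imports Complex_Main "HOL-Library.Extended_Real"
begin

text \<open>Vertices of the m-ary tree: the sequence (root, a1, ..., ak) is the list [a1,...,ak];
  the root is []. Successors of x are x @ [i], the predecessor of x is butlast x,
  the level of x is length x.\<close>

definition tree :: "nat \<Rightarrow> nat list set" where
  "tree m = {xs. \<forall>a\<in>set xs. a < m}"

definition p_beta :: "real \<Rightarrow> real" where
  "p_beta \<beta> = \<beta> / (1 - \<beta>)"

definition Delta :: "nat \<Rightarrow> real \<Rightarrow> (nat list \<Rightarrow> real) \<Rightarrow> nat list \<Rightarrow> real" where
  "Delta m \<beta> u x =
     (if x = [] then (1 / real m) * (\<Sum>i<m. u [i]) - u []
      else (\<beta> * u (butlast x) + ((1 - \<beta>) / real m) * (\<Sum>i<m. u (x @ [i])) - u x)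
           * (p_beta \<beta>) powi (- int (length x)))"

definition A_set :: "nat \<Rightarrow> real \<Rightarrow> real set" where
  "A_set m \<beta> = {l. l > 0 \<and> (\<exists>(v :: nat list \<Rightarrow> real) c C. 0 < c \<and> c < C \<and>
       (\<forall>x\<in>tree m. c < v x \<and> v x < C \<and> Delta m \<beta> v x + l * v x \<le> 0))}"

text \<open>lambda_1 as a supremum in the extended reals (a priori possibly +infinity).\<close>
definition lambda1 :: "nat \<Rightarrow> real \<Rightarrow> ereal" where
  "lambda1 m \<beta> = Sup (ereal ` A_set m \<beta>)"

end

theory Submission
  imports Defs
begin

lemma key:
  fixes m :: nat and \<beta> r p :: real and k :: nat
  assumes m: "m \<ge> 2" and b: "0 < \<beta>" "\<beta> < 1/2" and p: "p = \<beta> / (1 - \<beta>)"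
    and r: "p < r" "r < 1" and k: "k \<ge> 1"
  shows "(\<beta> * (1 + r ^ (k - 1)) + (1 - \<beta>) * (1 + r ^ (k + 1)) - (1 + r ^ k)) * inverse (p ^ k)
         \<le> (\<beta> - r + (1 - \<beta>) * r^2) / r"
proof -
  have p0: "0 < p" using p b by simp
  have r0: "0 < r" using p0 r by simp
  define g where "g = \<beta> - r + (1 - \<beta>) * r^2"
  have "g = (1 - \<beta>) * (r - p) * (r - 1)" unfolding g_def p using b
    by (simp add: field_simps power2_eq_square)
  hence g0: "g < 0" using b r by (simp add: mult_pos_neg)
  obtain j where j: "k = Suc j" using k by (cases k) auto
  have e: "\<beta> * (1 + r ^ (k - 1)) + (1 - \<beta>) * (1 + r ^ (k + 1)) - (1 + r ^ k) = g * r ^ j"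
    unfolding g_def j by (simp add: algebra_simps power2_eq_square)
  have "(r/p) ^ k \<ge> 1" using r p0 by (simp add: one_le_power)
  hence rk: "r ^ k \<ge> p ^ k" using p0 by (simp add: power_divide field_simps)
  have "g * r ^ j * inverse (p ^ k) = (g / r) * (r ^ k / p ^ k)"
    using r0 unfolding j by (simp add: field_simps)
  also have "\<dots> \<le> (g / r) * 1"
    apply (rule mult_left_mono_neg)
    using rk p0 g0 r0 by (auto simp: divide_simps)
  finally show ?thesis using e g_def by simp
qed

theorem lemma5p1:
  fixes m :: nat and \<beta> :: real
  assumes "m \<ge> 2" and "0 < \<beta>" and "\<beta> < 1/2"
  shows "A_set m \<beta> \<noteq> {} \<and> lambda1 m \<beta> > 0"
proof -
  define p where "p = \<beta> / (1 - \<beta>)"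
  have p0: "0 < p" "p < 1" using assms unfolding p_def by (auto simp: field_simps)
  define r where "r = (1 + p) / 2"
  have r: "p < r" "r < 1" "0 < r" using p0 unfolding r_def by auto
  define g where "g = \<beta> - r + (1 - \<beta>) * r^2"
  have "g = (1 - \<beta>) * (r - p) * (r - 1)" unfolding g_def p_def using assms
    by (simp add: field_simps power2_eq_square)
  hence g0: "g < 0" using assms r by (simp add: mult_pos_neg)
  define \<delta> where "\<delta> = min (1 - r) (- g / r)"
  have d0: "\<delta> > 0" unfolding \<delta>_def using r g0 by (simp add: divide_neg_pos)
  define v :: "nat list \<Rightarrow> real" where "v x = 1 + r ^ length x" for x
  have vb: "1 < v x" "v x \<le> 2" for x
    using r unfolding v_def by (auto simp: power_le_one)
  have D: "Delta m \<beta> v x \<le> - \<delta>" for x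
  proof (cases "x = []")
    case True
    have "Delta m \<beta> v x = r - 1" using True assms(1)
      unfolding Delta_def v_def by simp
    then show ?thesis unfolding \<delta>_def by simp
  next
    case False
    define k where "k = length x"
    have k: "k \<ge> 1" using False unfolding k_def by (cases x) auto
    have s: "(\<Sum>i<m. v (x @ [i])) = real m * (1 + r ^ (k + 1))"
      unfolding v_def k_def by simp
    have "Delta m \<beta> v x = (\<beta> * (1 + r ^ (k - 1)) + (1 - \<beta>) * (1 + r ^ (k + 1)) - (1 + r ^ k)) * inverse (p ^ k)"
      using False assms(1) unfolding Delta_def s
      by (simp add: v_def k_def p_def p_beta_def power_int_minus)
    also have "\<dots> \<le> g / r"
      unfolding g_def by (rule key[OF assms p_def r(1,2) k])
    also have "\<dots> \<le> - \<delta>" unfolding \<delta>_def by simp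
    finally show ?thesis .
  qed
  have inA: "\<delta> / 2 \<in> A_set m \<beta>"
    unfolding A_set_def
  proof (intro CollectI conjI exI)
    show "0 < \<delta> / 2" using d0 by simp
    show "(0::real) < 1" "(1::real) < 3" by auto
    show "\<forall>x\<in>tree m. 1 < v x \<and> v x < 3 \<and> Delta m \<beta> v x + \<delta> / 2 * v x \<le> 0"
    proof
      fix x
      have "\<delta> / 2 * v x \<le> \<delta> / 2 * 2" using vb[of x] d0 by (intro mult_left_mono) auto
      then show "1 < v x \<and> v x < 3 \<and> Delta m \<beta> v x + \<delta> / 2 * v x \<le> 0"
        using vb[of x] D[of x] by auto
    qed
  qed
  have "ereal (\<delta> / 2) \<le> lambda1 m \<beta>"
    unfolding lambda1_def using inA by (intro Sup_upper) auto
  moreover have "ereal 0 < ereal (\<delta> / 2)" using d0 by simp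
  ultimately have "ereal 0 < lambda1 m \<beta>" by (rule less_le_trans[rotated])
  then show ?thesis using inA by (auto simp: zero_ereal_def)
qed

end
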